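(* Let $G=(S,T,\pi)$ be a countable two-person win-lose game such that the family $\mathcal{B}^2_{\downarrow}(G)$ is ascending-union closed. Then for every $\mathbf{p}\in\Delta(S)$ the infimum $\inf_{\mathbf{q}\in\Delta(T)}\pi^{\mathrm{mix}}(\mathbf{p},\mathbf{q})$ is attained, the infimum $\inf_{\mathbf{q}\in\Delta(T)}\sup_{\mathbf{p}\in\Delta(S)}\pi^{\mathrm{mix}}(\mathbf{p},\mathbf{q})$ is attained, and $$\sup_{\mathbf{p}\in\Delta(S)}\min_{\mathbf{q}\in\Delta(T)}\pi^{\mathrm{mix}}(\mathbf{p},\mathbf{q})=\min_{\mathbf{q}\in\Delta(T)}\sup_{\mathbf{p}\in\Delta(S)}\pi^{\mathrm{mix}}(\mathbf{p},\mathbf{q}).$$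
   Context: A two-person win-lose game is a triple $G=(S,T,\pi)$ where $S,T$ are non-empty sets and $\pi:S\times T\to\{0,1\}$. It is countable if $|S|=|T|=\aleph_0$. For a set $X$, $\Delta(X)$ denotes the set of probability distributions on $X$ with at most countable support. For $\mathbf{p}\in\Delta(S)$, $\mathbf{q}\in\Delta(T)$, $\pi^{\mathrm{mix}}(\mathbf{p},\mathbf{q})=\sum_{s,t}p_sq_t\pi(s,t)$. For $t\in T$ let $B_t=\{s\in S:\pi(s,t)=0\}$, let $\mathcal{B}^2(G)=\{B_t:t\in T\}$, and $\mathcal{B}^2_{\downarrow}(G)=\{A\subseteq S:\exists t\in T,\ A\subseteq B_t\}$. A family $\mathcal{F}$ of sets is ascending-union closed if whenever $A_i\in\mathcal{F}$ for $i=1,2,\ldots$ and $A_1\subset A_2\subset\cdots$, then $\bigcup_{i=1}^\infty A_i\in\mathcal{F}$. *)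

theory Defs
  imports "HOL-Probability.Probability"
begin

text \<open>Mixed strategies on X: probability distributions supported in X
  (pmfs always have countable support).\<close>
definition Delta :: "'a set \<Rightarrow> 'a pmf set" where
  "Delta X = {p. set_pmf p \<subseteq> X}"

text \<open>Mixed payoff: sum over S x T of p_s q_t pi(s,t), with pi valued in {0,1}
  (encoded as a boolean, 1 = True).\<close>
definition pi_mix :: "'a set \<Rightarrow> 'b set \<Rightarrow> ('a \<Rightarrow> 'b \<Rightarrow> bool) \<Rightarrow> 'a pmf \<Rightarrow> 'b pmf \<Rightarrow> real" where
  "pi_mix S T \<pi> p q = (\<Sum>\<^sub>\<infinity>(s,t)\<in>S \<times> T. pmf p s * pmf q t * of_bool (\<pi> s t))"

definition B_set :: "'a set \<Rightarrow> ('a \<Rightarrow> 'b \<Rightarrow> bool) \<Rightarrow> 'b \<Rightarrow> 'a set" where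
  "B_set S \<pi> t = {s \<in> S. \<not> \<pi> s t}"

definition B2_down :: "'a set \<Rightarrow> 'b set \<Rightarrow> ('a \<Rightarrow> 'b \<Rightarrow> bool) \<Rightarrow> 'a set set" where
  "B2_down S T \<pi> = {A. \<exists>t\<in>T. A \<subseteq> B_set S \<pi> t}"

definition ascending_union_closed :: "'a set set \<Rightarrow> bool" where
  "ascending_union_closed F \<longleftrightarrow>
     (\<forall>A :: nat \<Rightarrow> 'a set. (\<forall>i. A i \<in> F) \<and> (\<forall>i. A i \<subset> A (Suc i)) \<longrightarrow> (\<Union>i. A i) \<in> F)"

end

theory Submission
  imports Defs
begin

definition val :: "('a \<Rightarrow> 'b \<Rightarrow> bool) \<Rightarrow> 'b pmf \<Rightarrow> 'a \<Rightarrow> real" where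
  "val \<pi> q s = measure_pmf.prob q {t. \<pi> s t}"

lemma val_nonneg: "0 \<le> val \<pi> q s" by (simp add: val_def)
lemma val_le1: "val \<pi> q s \<le> 1" by (simp add: val_def)

lemma integrable_val: "integrable (measure_pmf p) (val \<pi> q)"
  by (rule measure_pmf.integrable_const_bound[where B=1]) (auto simp: val_nonneg val_le1)

lemma pi_mix_eq:
  assumes "p \<in> Delta S" "q \<in> Delta T"
  shows "pi_mix S T \<pi> p q = measure_pmf.expectation p (val \<pi> q)"
proof -
  define g :: "'a \<times> 'b \<Rightarrow> real" where "g x = of_bool (\<pi> (fst x) (snd x))" for x
  define f where "f x = pmf (pair_pmf p q) x * g x" for x
  have fe: "(\<lambda>(s,t). pmf p s * pmf q t * of_bool (\<pi> s t)) = f"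
    by (auto simp: f_def g_def pmf_pair fun_eq_iff)
  have "pi_mix S T \<pi> p q = infsum f (S \<times> T)"
    unfolding pi_mix_def fe ..
  also have "\<dots> = infsum f UNIV"
  proof (rule infsum_cong_neutral)
    fix x assume "x \<in> UNIV - S \<times> T"
    then have "x \<notin> set_pmf (pair_pmf p q)" using assms by (auto simp: Delta_def)
    then show "f x = 0" by (simp add: f_def pmf_eq_0_set_pmf)
  qed auto
  also have "\<dots> = infsetsum f UNIV"
  proof (rule infsetsum_infsum[symmetric])
    show "Infinite_Set_Sum.abs_summable_on f UNIV"
      by (rule Infinite_Set_Sum.abs_summable_on_comparison_test'[OF pmf_abs_summable[of "pair_pmf p q"]])
         (auto simp: f_def g_def)
  qed
  also have "\<dots> = measure_pmf.expectation (pair_pmf p q) g"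
    unfolding f_def by (rule pmf_expectation_eq_infsetsum[symmetric])
  also have "\<dots> = enn2real (\<integral>\<^sup>+x. ennreal (g x) \<partial>pair_pmf p q)"
    by (subst integral_eq_nn_integral) (auto simp: g_def)
  also have "(\<integral>\<^sup>+x. ennreal (g x) \<partial>pair_pmf p q) = (\<integral>\<^sup>+s. \<integral>\<^sup>+t. ennreal (g (s,t)) \<partial>q \<partial>p)"
    by (rule nn_integral_pair_pmf')
  also have "\<dots> = (\<integral>\<^sup>+s. ennreal (val \<pi> q s) \<partial>p)"
  proof (rule nn_integral_cong)
    fix s
    have "(\<integral>\<^sup>+t. ennreal (g (s,t)) \<partial>q) = (\<integral>\<^sup>+t. indicator {t. \<pi> s t} t \<partial>q)"
      by (rule nn_integral_cong) (auto simp: g_def indicator_def)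
    also have "\<dots> = emeasure (measure_pmf q) {t. \<pi> s t}" by simp
    also have "\<dots> = ennreal (val \<pi> q s)" by (simp add: val_def measure_pmf.emeasure_eq_measure)
    finally show "(\<integral>\<^sup>+t. ennreal (g (s,t)) \<partial>q) = ennreal (val \<pi> q s)" .
  qed
  also have "\<dots> = ennreal (measure_pmf.expectation p (val \<pi> q))"
    by (rule nn_integral_eq_integral[OF integrable_val]) (auto simp: val_nonneg)
  finally show ?thesis by (simp add: Bochner_Integration.integral_nonneg val_nonneg)
qed

definition code :: "(nat \<Rightarrow> 'a) \<Rightarrow> 'a set \<Rightarrow> real" where
  "code e A = (\<Sum>j. if e j \<in> A then 2 / 3 ^ Suc j else 0)"

definition tailb :: "nat \<Rightarrow> nat \<Rightarrow> real" where
  "tailb N j = (if j < N then 0 else 2 / 3 ^ Suc j)"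

lemma tailb_sums: "tailb N sums (1 / 3 ^ N)"
proof -
  have g: "(\<lambda>j. (1/3::real) ^ j) sums (3/2)"
    using geometric_sums[of "1/3::real"] by simp
  have "(\<lambda>j. (2 / 3 ^ Suc N) * (1/3::real) ^ j) sums ((2 / 3 ^ Suc N) * (3/2))"
    by (rule sums_mult[OF g])
  moreover have "(\<lambda>j. (2 / 3 ^ Suc N) * (1/3::real) ^ j) = (\<lambda>j. tailb N (j + N))"
    by (auto simp: tailb_def fun_eq_iff power_add power_one_over field_simps)
  moreover have "(2 / 3 ^ Suc N) * (3/2) = (1 / 3 ^ N :: real)" by simp
  ultimately have "(\<lambda>j. tailb N (j + N)) sums (1 / 3 ^ N)" by simp
  then show ?thesis
    by (subst (asm) sums_zero_iff_shift) (auto simp: tailb_def)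
qed

lemma summable_tailb: "summable (tailb N)"
  using tailb_sums by (rule sums_summable)

lemma summable_code: "summable (\<lambda>j. if e j \<in> A then 2 / 3 ^ Suc j else (0::real))"
  by (rule summable_comparison_test[OF _ summable_tailb[of 0]]) (auto simp: tailb_def)

lemma code_diff_bound:
  assumes "\<And>j. j < N \<Longrightarrow> (e j \<in> A \<longleftrightarrow> e j \<in> A')"
  shows "\<bar>code e A - code e A'\<bar> \<le> 1 / 3 ^ N"
proof -
  define d where "d j = (if e j \<in> A then 2 / 3 ^ Suc j else 0) - (if e j \<in> A' then 2 / 3 ^ Suc j else (0::real))" for j
  have cd: "code e A - code e A' = suminf d"
    unfolding code_def d_def by (rule suminf_diff[OF summable_code summable_code])
  have "\<bar>d j\<bar> \<le> tailb N j" for j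
    using assms[of j] by (auto simp: d_def tailb_def)
  then have sa: "summable (\<lambda>j. \<bar>d j\<bar>)"
    by (intro summable_comparison_test[OF _ summable_tailb[of N]]) auto
  have "\<bar>suminf d\<bar> \<le> (\<Sum>j. \<bar>d j\<bar>)" by (rule summable_rabs[OF sa])
  also have "\<dots> \<le> suminf (tailb N)"
    by (rule suminf_le[OF _ sa summable_tailb]) (use \<open>\<And>j. \<bar>d j\<bar> \<le> tailb N j\<close> in auto)
  finally have "\<bar>suminf d\<bar> \<le> suminf (tailb N)" .
  then show ?thesis using tailb_sums cd by (simp add: sums_iff)
qed

lemma code_sep:
  assumes "\<And>j. j < N \<Longrightarrow> (e j \<in> A \<longleftrightarrow> e j \<in> A')" "e N \<in> A" "e N \<notin> A'"
  shows "code e A - code e A' \<ge> 1 / 3 ^ Suc N"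
proof -
  define d where "d j = (if e j \<in> A then 2 / 3 ^ Suc j else 0) - (if e j \<in> A' then 2 / 3 ^ Suc j else (0::real))" for j
  define r where "r j = (if j = N then 0 else d j)" for j
  define c where "c j = (if j = N then d j else 0)" for j
  have sd: "summable d" unfolding d_def by (rule summable_diff[OF summable_code summable_code])
  have "code e A - code e A' = suminf d"
    unfolding code_def d_def by (rule suminf_diff[OF summable_code summable_code])
  have rb: "\<bar>r j\<bar> \<le> tailb (Suc N) j" for j
    using assms(1)[of j] by (auto simp: r_def d_def tailb_def)
  have sr: "summable r"
    by (rule summable_comparison_test[OF _ summable_tailb[of "Suc N"]]) (use rb in auto)
  have sa: "summable (\<lambda>j. \<bar>r j\<bar>)"
    by (intro summable_comparison_test[OF _ summable_tailb[of "Suc N"]]) (use rb in auto)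
  have "\<bar>suminf r\<bar> \<le> (\<Sum>j. \<bar>r j\<bar>)" by (rule summable_rabs[OF sa])
  also have "\<dots> \<le> suminf (tailb (Suc N))"
    by (rule suminf_le[OF _ sa summable_tailb]) (use rb in auto)
  finally have "\<bar>suminf r\<bar> \<le> suminf (tailb (Suc N))" .
  then have r1: "suminf r \<ge> - (1 / 3 ^ Suc N)" using tailb_sums[of "Suc N"] by (simp add: sums_iff)
  have cs: "c sums d N" unfolding c_def using sums_single[of N d] by (simp add: c_def)
  have "d = (\<lambda>j. c j + r j)" by (auto simp: fun_eq_iff c_def r_def)
  then have "suminf d = d N + suminf r"
    using sums_add[OF cs summable_sums[OF sr]] by (simp add: sums_iff)
  moreover have "d N = 2 / 3 ^ Suc N" using assms by (simp add: d_def)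
  ultimately show ?thesis using r1 \<open>code e A - code e A' = suminf d\<close> by simp
qed

lemma code_close_agree:
  assumes "\<bar>code e A - code e A'\<bar> < 1 / 3 ^ N" "j < N"
  shows "e j \<in> A \<longleftrightarrow> e j \<in> A'"
proof (rule ccontr)
  assume nag: "\<not> (e j \<in> A \<longleftrightarrow> e j \<in> A')"
  define j0 where "j0 = (LEAST j. \<not> (e j \<in> A \<longleftrightarrow> e j \<in> A'))"
  have j0: "\<not> (e j0 \<in> A \<longleftrightarrow> e j0 \<in> A')" unfolding j0_def by (rule LeastI[of _ j]) (use nag in auto)
  have j0le: "j0 \<le> j" unfolding j0_def by (rule Least_le) (use nag in auto)
  have below: "\<And>i. i < j0 \<Longrightarrow> (e i \<in> A \<longleftrightarrow> e i \<in> A')"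
    using not_less_Least j0_def by blast
  have "\<bar>code e A - code e A'\<bar> \<ge> 1 / 3 ^ Suc j0"
  proof (cases "e j0 \<in> A")
    case True
    then show ?thesis using code_sep[of j0 e A A'] below j0 by fastforce
  next
    case False
    then show ?thesis using code_sep[of j0 e A' A] below j0 by fastforce
  qed
  moreover have "(1::real) / 3 ^ N \<le> 1 / 3 ^ Suc j0"
    using j0le assms(2) by (intro divide_left_mono power_increasing) auto
  ultimately show False using assms(1) by linarith
qed

lemma code_inj:
  assumes "code e A = code e A'" "A \<subseteq> range e" "A' \<subseteq> range e"
  shows "A = A'"
proof -
  have "e j \<in> A \<longleftrightarrow> e j \<in> A'" for j
    by (rule code_close_agree[of e A A' "Suc j"]) (use assms in auto)
  then show ?thesis using assms by blast
qed

lemma code_bounds: "0 \<le> code e A" "code e A \<le> 1"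
proof -
  have "\<bar>code e A - code e {}\<bar> \<le> 1 / 3 ^ 0" by (rule code_diff_bound) auto
  moreover have "code e {} = 0" by (simp add: code_def)
  moreover have "0 \<le> code e A" unfolding code_def by (rule suminf_nonneg[OF summable_code]) auto
  ultimately show "0 \<le> code e A" "code e A \<le> 1" by auto
qed

definition pw_closed :: "(nat \<Rightarrow> 'a) \<Rightarrow> 'a set set \<Rightarrow> bool" where
  "pw_closed e K \<longleftrightarrow> (\<forall>Am A. (\<forall>m. Am m \<in> K) \<and> A \<subseteq> range e \<and>
     (\<forall>j. eventually (\<lambda>m. e j \<in> Am m \<longleftrightarrow> e j \<in> A) sequentially) \<longrightarrow> A \<in> K)"

lemma pow3_small: "0 < (\<epsilon>::real) \<Longrightarrow> \<exists>N. 1 / 3 ^ N < \<epsilon>"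
  using real_arch_pow_inv[of \<epsilon> "1/3"] by (auto simp: power_one_over)

lemma closed_code_image:
  assumes "pw_closed e K" "inj e"
  shows "closed (code e ` K)"
  unfolding closed_sequential_limits
proof (intro allI impI, elim conjE)
  fix x l assume xK: "\<forall>n. x n \<in> code e ` K" and xl: "x \<longlonglongrightarrow> l"
  have "\<forall>n. \<exists>A. A \<in> K \<and> x n = code e A" using xK by blast
  then obtain Am where Am: "\<forall>m. Am m \<in> K \<and> x m = code e (Am m)"
    using choice[of "\<lambda>n A. A \<in> K \<and> x n = code e A"] by blast
  have C: "Cauchy x" using xl by (rule LIMSEQ_imp_Cauchy)
  have "\<forall>j. \<exists>M. \<forall>m\<ge>M. \<forall>n\<ge>M. (e j \<in> Am m \<longleftrightarrow> e j \<in> Am n)"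
  proof
    fix j
    have "\<exists>M. \<forall>m\<ge>M. \<forall>n\<ge>M. dist (x m) (x n) < 1 / 3 ^ Suc j"
      by (rule metric_CauchyD[OF C]) simp
    then obtain M where M: "\<forall>m\<ge>M. \<forall>n\<ge>M. dist (x m) (x n) < 1 / 3 ^ Suc j" by blast
    show "\<exists>M. \<forall>m\<ge>M. \<forall>n\<ge>M. (e j \<in> Am m \<longleftrightarrow> e j \<in> Am n)"
    proof (rule exI[of _ M], intro allI impI)
      fix m n assume "m \<ge> M" "n \<ge> M"
      then have "\<bar>code e (Am m) - code e (Am n)\<bar> < 1 / 3 ^ Suc j"
        using M Am by (simp add: dist_real_def)
      then show "e j \<in> Am m \<longleftrightarrow> e j \<in> Am n" by (rule code_close_agree) simp
    qed
  qed
  then obtain M where M: "\<forall>j. \<forall>m\<ge>M j. \<forall>n\<ge>M j. (e j \<in> Am m \<longleftrightarrow> e j \<in> Am n)"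
    using choice[of "\<lambda>j M. \<forall>m\<ge>M. \<forall>n\<ge>M. (e j \<in> Am m \<longleftrightarrow> e j \<in> Am n)"] by blast
  define A where "A = {e j |j. e j \<in> Am (M j)}"
  have Aj: "e j \<in> A \<longleftrightarrow> e j \<in> Am (M j)" for j
  proof
    assume "e j \<in> A"
    then obtain j' where "e j = e j'" "e j' \<in> Am (M j')" by (auto simp: A_def)
    then show "e j \<in> Am (M j)" using assms(2) by (metis injD)
  qed (auto simp: A_def)
  have ev: "eventually (\<lambda>m. e j \<in> Am m \<longleftrightarrow> e j \<in> A) sequentially" for j
    unfolding eventually_sequentially
  proof (rule exI[of _ "M j"], intro allI impI)
    fix m assume "m \<ge> M j"
    have "e j \<in> Am m \<longleftrightarrow> e j \<in> Am (M j)"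
      using spec[OF M, of j, rule_format, of m "M j"] \<open>m \<ge> M j\<close> by simp
    then show "e j \<in> Am m \<longleftrightarrow> e j \<in> A" using Aj[of j] by simp
  qed
  have Ar: "A \<subseteq> range e" by (auto simp: A_def)
  have "A \<in> K"
  proof -
    have "\<forall>m. Am m \<in> K" using Am by blast
    then show ?thesis using assms(1)[unfolded pw_closed_def, rule_format, of Am A] ev Ar by blast
  qed
  moreover have "x \<longlonglongrightarrow> code e A"
  proof (rule LIMSEQ_I)
    fix r :: real assume "0 < r"
    then obtain N where N: "1 / 3 ^ N < r" using pow3_small by blast
    have "eventually (\<lambda>m. \<forall>j\<in>{..<N}. e j \<in> Am m \<longleftrightarrow> e j \<in> A) sequentially"
      by (rule eventually_ball_finite) (use ev in auto)
    then obtain no where no: "\<forall>m\<ge>no. \<forall>j\<in>{..<N}. (e j \<in> Am m \<longleftrightarrow> e j \<in> A)"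
      unfolding eventually_sequentially by blast
    show "\<exists>no. \<forall>n\<ge>no. norm (x n - code e A) < r"
    proof (rule exI[of _ no], intro allI impI)
      fix n assume "n \<ge> no"
      then have "\<bar>code e (Am n) - code e A\<bar> \<le> 1 / 3 ^ N"
        using no by (intro code_diff_bound) auto
      then show "norm (x n - code e A) < r" using N Am by simp
    qed
  qed
  ultimately show "l \<in> code e ` K" using xl LIMSEQ_unique by blast
qed

lemma portmanteau_closed:
  fixes \<nu> :: "nat \<Rightarrow> real measure" and M :: "real measure"
  assumes \<nu>: "\<And>n. real_distribution (\<nu> n)" and M: "real_distribution M"
    and conv: "weak_conv_m \<nu> M" and F: "closed F" and e: "\<epsilon> > 0"
  shows "eventually (\<lambda>n. measure (\<nu> n) F \<le> measure M F + \<epsilon>) sequentially"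
proof (cases "F = {}")
  case True then show ?thesis using e by simp
next
  case False
  interpret M: real_distribution M by fact
  have Fb: "F \<in> sets borel" using F by (rule borel_closed)
  define f where "f k x = max 0 (1 - real k * infdist x F)" for k x
  have fcont: "isCont (f k) x" for k x unfolding f_def by (intro continuous_intros)
  have fmeas: "f k \<in> borel_measurable borel" for k
    by (intro borel_measurable_continuous_onI continuous_at_imp_continuous_on) (use fcont in auto)
  have f01: "0 \<le> f k x" "f k x \<le> 1" for k x
    unfolding f_def using infdist_nonneg[of x F] by (auto simp: max_def)
  have fb: "norm (f k x) \<le> 1" for k x using f01[of k x] by simp
  have indle: "indicator F x \<le> f k x" for k x
  proof (cases "x \<in> F")
    case True
    then have "infdist x F = 0" using in_closed_iff_infdist_zero[OF F False] by simp
    then show ?thesis using True by (simp add: f_def)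
  qed (use f01 in auto)
  have lim: "(\<lambda>k. f k x) \<longlonglongrightarrow> indicator F x" for x
  proof (cases "x \<in> F")
    case True
    then have "infdist x F = 0" using in_closed_iff_infdist_zero[OF F False] by simp
    then show ?thesis using True by (simp add: f_def)
  next
    case nF: False
    then have d: "infdist x F > 0" using in_closed_iff_infdist_zero[OF F False] infdist_nonneg[of x F] by auto
    obtain K :: nat where K: "1 < real K * infdist x F" using ex_less_of_nat_mult[OF d, of 1] by auto
    have "eventually (\<lambda>k. f k x = indicator F x) sequentially"
      unfolding eventually_sequentially
    proof (rule exI[of _ K], intro allI impI)
      fix k assume "K \<le> k"
      then have "real K * infdist x F \<le> real k * infdist x F" using d by (intro mult_right_mono) auto
      then show "f k x = indicator F x" using K nF by (simp add: f_def)
    qed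
    then show ?thesis by (rule tendsto_eventually)
  qed
  have "(\<lambda>k. \<integral>x. f k x \<partial>M) \<longlonglongrightarrow> (\<integral>x. indicator F x \<partial>M)"
    by (rule integral_dominated_convergence[where w="\<lambda>_. 1"])
       (use fmeas fb lim Fb in \<open>auto simp: measurable_cong_sets[OF M.events_eq_borel refl]\<close>)
  moreover have "(\<integral>x. indicator F x \<partial>M) = measure M F"
    using Fb by (simp add: M.events_eq_borel)
  ultimately have "eventually (\<lambda>k. (\<integral>x. f k x \<partial>M) < measure M F + \<epsilon>) sequentially"
    using e by (intro order_tendstoD(2)) auto
  then obtain k where k: "(\<integral>x. f k x \<partial>M) < measure M F + \<epsilon>"
    by (auto simp: eventually_sequentially)
  have "(\<lambda>n. \<integral>x. f k x \<partial>\<nu> n) \<longlonglongrightarrow> (\<integral>x. f k x \<partial>M)"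
    by (rule weak_conv_imp_integral_bdd_continuous_conv[OF \<nu> M conv fcont fb])
  then have "eventually (\<lambda>n. (\<integral>x. f k x \<partial>\<nu> n) < measure M F + \<epsilon>) sequentially"
    using k by (intro order_tendstoD(2)) auto
  then show ?thesis
  proof (rule eventually_mono)
    fix n assume *: "(\<integral>x. f k x \<partial>\<nu> n) < measure M F + \<epsilon>"
    interpret N: real_distribution "\<nu> n" by (rule \<nu>)
    have "measure (\<nu> n) F = (\<integral>x. indicator F x \<partial>\<nu> n)"
      using Fb by (simp add: N.events_eq_borel)
    also have "\<dots> \<le> (\<integral>x. f k x \<partial>\<nu> n)"
    proof (rule integral_mono)
      show "integrable (\<nu> n) (indicator F :: real \<Rightarrow> real)"
        by (rule integrable_real_indicator) (use Fb in \<open>auto simp: N.events_eq_borel N.emeasure_eq_measure\<close>)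
      show "integrable (\<nu> n) (f k)"
        by (rule N.integrable_const_bound[where B=1])
           (use fmeas fb in \<open>auto simp: measurable_cong_sets[OF N.events_eq_borel refl]\<close>)
    qed (use indle in auto)
    finally show "measure (\<nu> n) F \<le> measure M F + \<epsilon>" using * by simp
  qed
qed

lemma chain_union_in:
  assumes auc: "ascending_union_closed F" and P: "\<And>j. P j \<in> F" and mo: "\<And>j. P j \<subseteq> P (Suc j)"
  shows "(\<Union>j. P j) \<in> F"
proof -
  have inc: "incseq P" using mo by (rule incseq_SucI)
  show ?thesis
  proof (cases "\<exists>J. \<forall>j\<ge>J. P j = P J")
    case True
    then obtain J where J: "\<forall>j\<ge>J. P j = P J" by blast
    have "(\<Union>j. P j) = P J"
    proof
      show "(\<Union>j. P j) \<subseteq> P J"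
      proof (rule UN_least)
        fix j show "P j \<subseteq> P J"
        proof (cases "j \<le> J")
          case True then show ?thesis using incseqD[OF inc True] by simp
        next
          case False then have "J \<le> j" by simp
          then have "P j = P J" using J by blast
          then show ?thesis by simp
        qed
      qed
    qed blast
    then show ?thesis using P by simp
  next
    case False
    have ex: "\<exists>j. j > J \<and> P J \<subset> P j" for J
    proof -
      obtain j where j: "j \<ge> J" "P j \<noteq> P J" using False by blast
      then have "P J \<subseteq> P j" using incseqD[OF inc j(1)] by simp
      moreover have "j \<noteq> J" using j by auto
      ultimately show ?thesis using j by (intro exI[of _ j]) auto
    qed
    define g where "g = rec_nat 0 (\<lambda>_ k. SOME j. j > k \<and> P k \<subset> P j)"
    have gS: "g (Suc k) = (SOME j. j > g k \<and> P (g k) \<subset> P j)" for k by (simp add: g_def)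
    have gs: "g (Suc k) > g k \<and> P (g k) \<subset> P (g (Suc k))" for k
      unfolding gS by (rule someI_ex[OF ex])
    have "(\<Union>k. P (g k)) \<in> F"
      using auc unfolding ascending_union_closed_def
      by (elim allE[of _ "\<lambda>k. P (g k)"]) (use P gs in blast)
    moreover have "(\<Union>k. P (g k)) = (\<Union>j. P j)"
    proof
      have gk: "k \<le> g k" for k
      proof (induction k)
        case (Suc k) then show ?case using gs[of k] by simp
      qed simp
      show "(\<Union>j. P j) \<subseteq> (\<Union>k. P (g k))"
      proof (rule UN_least)
        fix j have "P j \<subseteq> P (g j)" using incseqD[OF inc gk[of j]] by simp
        then show "P j \<subseteq> (\<Union>k. P (g k))" by blast
      qed
    qed blast
    ultimately show ?thesis by simp
  qed
qed

lemma ev_ex: "eventually P sequentially \<Longrightarrow> \<exists>n. P n"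
  by (auto simp: eventually_sequentially)

lemma pw_closed_D:
  assumes auc: "ascending_union_closed (B2_down S T \<pi>)"
  shows "pw_closed e (B2_down S T \<pi>)"
  unfolding pw_closed_def
proof (intro allI impI, elim conjE)
  fix Am A assume Am: "\<forall>m. Am m \<in> B2_down S T \<pi>" and AS: "A \<subseteq> range e"
    and ev: "\<forall>j. eventually (\<lambda>m. e j \<in> Am m \<longleftrightarrow> e j \<in> A) sequentially"
  define P where "P j = A \<inter> e ` {..<j}" for j
  have PD: "P j \<in> B2_down S T \<pi>" for j
  proof -
    have "eventually (\<lambda>m. \<forall>i\<in>{..<j}. e i \<in> Am m \<longleftrightarrow> e i \<in> A) sequentially"
      by (rule eventually_ball_finite) (use ev in auto)
    then obtain m where m: "\<forall>i\<in>{..<j}. e i \<in> Am m \<longleftrightarrow> e i \<in> A" using ev_ex by blast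
    have "P j \<subseteq> Am m" using m by (auto simp: P_def)
    moreover obtain t where "t \<in> T" "Am m \<subseteq> B_set S \<pi> t" using Am by (auto simp: B2_down_def)
    ultimately show ?thesis by (auto simp: B2_down_def)
  qed
  have "P j \<subseteq> P (Suc j)" for j by (auto simp: P_def lessThan_Suc)
  then have "(\<Union>j. P j) \<in> B2_down S T \<pi>" by (rule chain_union_in[OF auc PD])
  moreover have "(\<Union>j. P j) = A"
  proof
    show "A \<subseteq> (\<Union>j. P j)"
    proof
      fix x assume "x \<in> A"
      then obtain i where "x = e i" using AS by blast
      then have "x \<in> P (Suc i)" using \<open>x \<in> A\<close> by (auto simp: P_def)
      then show "x \<in> (\<Union>j. P j)" by blast
    qed
  qed (auto simp: P_def)
  ultimately show "A \<in> B2_down S T \<pi>" by simp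
qed

lemma pw_closed_F:
  assumes "pw_closed e K" "s = e j0"
  shows "pw_closed e {A \<in> K. s \<in> A}"
  unfolding pw_closed_def
proof (intro allI impI, elim conjE)
  fix Am A assume Am: "\<forall>m. Am m \<in> {A \<in> K. s \<in> A}" and AS: "A \<subseteq> range e"
    and ev: "\<forall>j. eventually (\<lambda>m. e j \<in> Am m \<longleftrightarrow> e j \<in> A) sequentially"
  have "A \<in> K" using assms(1)[unfolded pw_closed_def, rule_format, of Am A] Am AS ev by blast
  moreover obtain m where "e j0 \<in> Am m \<longleftrightarrow> e j0 \<in> A" using ev ev_ex by blast
  then have "s \<in> A" using Am assms(2) by auto
  ultimately show "A \<in> {A \<in> K. s \<in> A}" by simp
qed

lemma pw_closed_E: "pw_closed e {A. A \<subseteq> B}"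
  unfolding pw_closed_def
proof (intro allI impI, elim conjE)
  fix Am A assume Am: "\<forall>m. Am m \<in> {A. A \<subseteq> B}" and AS: "A \<subseteq> range e"
    and ev: "\<forall>j. eventually (\<lambda>m. e j \<in> Am m \<longleftrightarrow> e j \<in> A) sequentially"
  show "A \<in> {A. A \<subseteq> B}"
  proof (safe)
    fix x assume "x \<in> A"
    then obtain j where j: "x = e j" using AS by blast
    obtain m where "e j \<in> Am m \<longleftrightarrow> e j \<in> A" using ev ev_ex by blast
    then show "x \<in> B" using Am j \<open>x \<in> A\<close> by auto
  qed
qed

lemma prob_mono_supp:
  assumes "set_pmf p \<subseteq> T" "A \<inter> T \<subseteq> B"
  shows "measure_pmf.prob p A \<le> measure_pmf.prob p B"
proof -
  have "measure_pmf.prob p A = measure_pmf.prob p (A \<inter> set_pmf p)" by (simp add: measure_Int_set_pmf)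
  also have "\<dots> \<le> measure_pmf.prob p B"
    by (rule measure_pmf.finite_measure_mono) (use assms in auto)
  finally show ?thesis .
qed

lemma val_compl: "val \<pi> q s = 1 - measure_pmf.prob q {t. \<not> \<pi> s t}"
proof -
  have "measure_pmf.prob q (UNIV - {t. \<pi> s t}) = 1 - measure_pmf.prob q {t. \<pi> s t}"
    using measure_pmf.prob_compl[of "{t. \<pi> s t}" q] by simp
  moreover have "UNIV - {t. \<pi> s t} = {t. \<not> \<pi> s t}" by auto
  ultimately show ?thesis by (simp add: val_def)
qed

lemma key_lemma:
  fixes S :: "'a set" and T :: "'b set" and \<pi> :: "'a \<Rightarrow> 'b \<Rightarrow> bool"
    and e :: "nat \<Rightarrow> 'a" and tt :: "nat \<Rightarrow> 'b" and qs :: "nat \<Rightarrow> 'b pmf"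
  assumes auc: "ascending_union_closed (B2_down S T \<pi>)"
    and e: "inj e" "range e = S" and tt: "range tt = T"
    and qs: "\<And>n. set_pmf (qs n) \<subseteq> T"
  shows "\<exists>q \<in> Delta T. \<exists>r. strict_mono r \<and>
    (\<forall>s\<in>S. \<forall>\<epsilon>>0. eventually (\<lambda>n. val \<pi> q s \<le> val \<pi> (qs (r n)) s + \<epsilon>) sequentially)"
proof -
  define cf where "cf t = code e (B_set S \<pi> t)" for t
  define \<mu> where "\<mu> n = distr (measure_pmf (qs n)) borel cf" for n
  have \<mu>d: "real_distribution (\<mu> n)" for n
    unfolding real_distribution_def real_distribution_axioms_def \<mu>_def
    by (auto intro!: prob_space.prob_space_distr prob_space_measure_pmf)
  have \<mu>m: "measure (\<mu> n) X = measure_pmf.prob (qs n) (cf -` X)" if "X \<in> sets borel" for n X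
    unfolding \<mu>_def using that by (subst measure_distr) auto
  have tight: "tight \<mu>"
    unfolding tight_def
  proof (intro conjI allI impI)
    fix n show "real_distribution (\<mu> n)" by (rule \<mu>d)
  next
    fix \<epsilon> :: real assume "\<epsilon> > 0"
    have "measure (\<mu> n) {-1<..1} = 1" for n
    proof -
      have "cf t \<in> {-1<..1}" for t using code_bounds[of e "B_set S \<pi> t"] by (simp add: cf_def)
      then have "cf -` {-1<..1} = UNIV" by blast
      then show ?thesis by (subst \<mu>m) auto
    qed
    then show "\<exists>a b. a < b \<and> (\<forall>n. 1 - \<epsilon> < measure (\<mu> n) {a<..b})"
      using \<open>\<epsilon> > 0\<close> by (intro exI[of _ "-1"] exI[of _ 1]) auto
  qed
  obtain r M where r: "strict_mono r" and M: "real_distribution M"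
    and wc: "weak_conv_m (\<mu> \<circ> id \<circ> r) M"
    using tight_imp_convergent_subsubsequence[OF tight, of id] by (auto simp: strict_mono_def)
  interpret M: real_distribution M by (rule M)
  define \<nu> where "\<nu> n = \<mu> (r n)" for n
  have \<nu>d: "real_distribution (\<nu> n)" for n unfolding \<nu>_def by (rule \<mu>d)
  have "\<nu> = \<mu> \<circ> id \<circ> r" by (simp add: \<nu>_def fun_eq_iff)
  then have wc': "weak_conv_m \<nu> M" using wc by simp
  note port = portmanteau_closed[OF \<nu>d M wc']

  define D where "D = B2_down S T \<pi>"
  have pwD: "pw_closed e D" unfolding D_def by (rule pw_closed_D[OF auc])
  have DS: "A \<subseteq> S" if "A \<in> D" for A using that by (auto simp: D_def B2_down_def B_set_def)
  have BD: "B_set S \<pi> t \<in> D" if "t \<in> T" for t using that by (auto simp: D_def B2_down_def)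
  define Dset where "Dset = code e ` D"
  have Dcl: "closed Dset" unfolding Dset_def by (rule closed_code_image[OF pwD e(1)])
  have "measure M Dset \<ge> 1"
  proof (rule field_le_epsilon)
    fix \<epsilon> :: real assume "\<epsilon> > 0"
    obtain n where n: "measure (\<nu> n) Dset \<le> measure M Dset + \<epsilon>"
      using ev_ex[OF port[OF Dcl \<open>\<epsilon> > 0\<close>]] by blast
    have "measure (\<nu> n) Dset = measure_pmf.prob (qs (r n)) (cf -` Dset)"
      unfolding \<nu>_def by (rule \<mu>m) (use Dcl in auto)
    also have "\<dots> \<ge> measure_pmf.prob (qs (r n)) UNIV"
      by (rule prob_mono_supp[OF qs]) (auto simp: cf_def Dset_def intro!: imageI BD)
    finally show "1 \<le> measure M Dset + \<epsilon>" using n by simp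
  qed
  then have MD1: "measure M Dset = 1" using M.prob_le_1[of Dset] by linarith

  define G where "G i = code e ` {A. A \<subseteq> B_set S \<pi> (tt i)}" for i
  have Gcl: "closed (G i)" for i unfolding G_def by (rule closed_code_image[OF pw_closed_E e(1)])
  have Gsets: "range G \<subseteq> sets M" using Gcl by (auto simp: M.events_eq_borel)
  define H where "H = disjointed G"
  have Hsets: "range H \<subseteq> sets M" unfolding H_def by (rule sets.range_disjointed_sets[OF Gsets])
  have Hdisj: "disjoint_family H" unfolding H_def by (rule disjoint_family_disjointed)
  have HG: "(\<Union>i. H i) = (\<Union>i. G i)" unfolding H_def by (rule UN_disjointed_eq)
  have DG: "Dset \<subseteq> (\<Union>i. G i)"
  proof
    fix x assume "x \<in> Dset"
    then obtain A where A: "A \<in> D" "x = code e A" by (auto simp: Dset_def)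
    then obtain t where t: "t \<in> T" "A \<subseteq> B_set S \<pi> t" by (auto simp: D_def B2_down_def)
    then obtain i where "t = tt i" using tt by blast
    then show "x \<in> (\<Union>i. G i)" using A t by (auto simp: G_def)
  qed
  have UG1: "measure M (\<Union>i. G i) = 1"
  proof -
    have "measure M Dset \<le> measure M (\<Union>i. G i)"
      by (rule M.finite_measure_mono[OF DG]) (use Gsets in auto)
    then show ?thesis using MD1 M.prob_le_1[of "\<Union>i. G i"] by linarith
  qed
  define w where "w i = measure M (H i)" for i
  have w0: "0 \<le> w i" for i by (simp add: w_def)
  have wsums: "w sums 1"
    using measure_UNION[OF Hsets Hdisj] UG1 HG unfolding w_def by (simp add: M.emeasure_eq_measure)
  have wint: "(\<integral>\<^sup>+i. ennreal (w i) \<partial>count_space UNIV) = 1"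
    using wsums by (simp add: nn_integral_count_space_nat suminf_ennreal2[OF w0 sums_summable[OF wsums]] sums_iff)
  define qh where "qh = embed_pmf w"
  have pqh: "pmf qh i = w i" for i unfolding qh_def by (rule pmf_embed_pmf[OF w0 wint])
  define q where "q = map_pmf tt qh"
  have qT: "q \<in> Delta T" using tt by (auto simp: q_def Delta_def)
  have emqh: "emeasure (measure_pmf qh) I = emeasure M (\<Union>i\<in>I. H i)" for I
  proof -
    define H' where "H' i = (if i \<in> I then H i else {})" for i
    have H'sets: "range H' \<subseteq> sets M" using Hsets by (auto simp: H'_def)
    have H'disj: "disjoint_family H'" using Hdisj by (auto simp: H'_def disjoint_family_on_def)
    have "emeasure (measure_pmf qh) I = (\<integral>\<^sup>+i. ennreal (pmf qh i) \<partial>count_space I)"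
      by (simp add: nn_integral_pmf)
    also have "\<dots> = (\<integral>\<^sup>+i. ennreal (pmf qh i) * indicator I i \<partial>count_space UNIV)"
      by (simp add: nn_integral_count_space_indicator)
    also have "\<dots> = (\<Sum>i. ennreal (pmf qh i) * indicator I i)"
      by (rule nn_integral_count_space_nat)
    also have "\<dots> = (\<Sum>i. emeasure M (H' i))"
      by (intro suminf_cong) (auto simp: H'_def pqh w_def M.emeasure_eq_measure indicator_def)
    also have "\<dots> = emeasure M (\<Union>i. H' i)" by (rule suminf_emeasure[OF H'sets H'disj])
    also have "(\<Union>i. H' i) = (\<Union>i\<in>I. H i)" by (auto simp: H'_def split: if_splits)
    finally show ?thesis .
  qed
  have main: "val \<pi> q s \<le> val \<pi> (qs (r n)) s + \<epsilon>"
    if sS: "s \<in> S" and n: "measure (\<nu> n) (code e ` {A \<in> D. s \<in> A}) \<le> measure M (code e ` {A \<in> D. s \<in> A}) + \<epsilon>"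
    for s n \<epsilon>
  proof -
    define Fs where "Fs = code e ` {A \<in> D. s \<in> A}"
    obtain j0 where j0: "s = e j0" using sS e(2) by blast
    have Fcl: "closed Fs" unfolding Fs_def by (rule closed_code_image[OF pw_closed_F[OF pwD j0] e(1)])
    define I where "I = {i. \<not> \<pi> s (tt i)}"
    have FH: "Fs \<subseteq> (\<Union>i\<in>I. H i)"
    proof
      fix x assume "x \<in> Fs"
      then obtain A where A: "A \<in> D" "s \<in> A" "x = code e A" by (auto simp: Fs_def)
      then have "x \<in> Dset" by (auto simp: Dset_def)
      then have "x \<in> (\<Union>i. H i)" using DG HG by blast
      then obtain i where i: "x \<in> H i" by blast
      have "H i \<subseteq> G i" unfolding H_def by (rule disjointed_subset)
      then have "x \<in> G i" using i by (rule subsetD)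
      then obtain A' where A': "A' \<subseteq> B_set S \<pi> (tt i)" "x = code e A'" by (auto simp: G_def)
      have "A' \<subseteq> range e" using A' e(2) by (auto simp: B_set_def)
      moreover have "A \<subseteq> range e" using DS[OF A(1)] e(2) by simp
      ultimately have "A = A'" using code_inj[of e A A'] A A' by simp
      then have "i \<in> I" using A A' by (auto simp: I_def B_set_def)
      then show "x \<in> (\<Union>i\<in>I. H i)" using i by blast
    qed
    have UHs: "(\<Union>i\<in>I. H i) \<in> sets M" using Hsets by auto
    have "measure M Fs \<le> measure M (\<Union>i\<in>I. H i)"
      by (rule M.finite_measure_mono[OF FH UHs])
    also have "\<dots> = measure_pmf.prob qh I"
      using emqh[of I] by (simp add: M.emeasure_eq_measure measure_pmf.emeasure_eq_measure)
    also have "\<dots> = measure_pmf.prob q {t. \<not> \<pi> s t}"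
      by (simp add: q_def measure_map_pmf I_def vimage_def)
    finally have 1: "measure M Fs \<le> measure_pmf.prob q {t. \<not> \<pi> s t}" .
    have "measure_pmf.prob (qs (r n)) {t. \<not> \<pi> s t} \<le> measure_pmf.prob (qs (r n)) (cf -` Fs)"
    proof (rule prob_mono_supp[OF qs])
      show "{t. \<not> \<pi> s t} \<inter> T \<subseteq> cf -` Fs"
      proof
        fix t assume t: "t \<in> {t. \<not> \<pi> s t} \<inter> T"
        then have "B_set S \<pi> t \<in> {A \<in> D. s \<in> A}" using BD[of t] sS by (auto simp: B_set_def)
        then show "t \<in> cf -` Fs" by (auto simp: cf_def Fs_def)
      qed
    qed
    also have "\<dots> = measure (\<nu> n) Fs"
      unfolding \<nu>_def by (rule \<mu>m[symmetric]) (use Fcl in auto)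
    finally have 2: "measure_pmf.prob (qs (r n)) {t. \<not> \<pi> s t} \<le> measure (\<nu> n) Fs" .
    show ?thesis using 1 2 n unfolding Fs_def[symmetric] val_compl[of \<pi> q s] val_compl[of \<pi> "qs (r n)" s]
      by linarith
  qed
  show ?thesis
  proof (intro bexI[OF _ qT] exI[of _ r] conjI r ballI allI impI)
    fix s \<epsilon> assume sS: "s \<in> S" and e0: "(\<epsilon>::real) > 0"
    obtain j0 where j0: "s = e j0" using sS e(2) by blast
    have Fcl: "closed (code e ` {A \<in> D. s \<in> A})"
      by (rule closed_code_image[OF pw_closed_F[OF pwD j0] e(1)])
    show "eventually (\<lambda>n. val \<pi> q s \<le> val \<pi> (qs (r n)) s + \<epsilon>) sequentially"
      using port[OF Fcl e0] by (rule eventually_mono) (rule main[OF sS])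
  qed
qed

lemma exp_convex_bound:
  fixes a \<eta> :: real
  assumes "0 \<le> a" "a \<le> 1"
  shows "exp (\<eta> * a) \<le> 1 + (exp \<eta> - 1) * a"
proof -
  have "exp ((1 - a) *\<^sub>R 0 + a *\<^sub>R \<eta>) \<le> (1 - a) * exp 0 + a * exp \<eta>"
    by (rule convex_onD[OF exp_convex]) (use assms in auto)
  then show ?thesis by (simp add: algebra_simps)
qed

lemma mwu:
  fixes Fs :: "'a set" and Aset :: "('a \<Rightarrow> real) set" and c \<delta> :: real
  assumes fin: "finite Fs" "Fs \<noteq> {}"
    and A01: "\<And>a s. a \<in> Aset \<Longrightarrow> 0 \<le> a s \<and> a s \<le> 1"
    and resp: "\<And>p. (\<forall>s\<in>Fs. 0 \<le> p s) \<Longrightarrow> (\<Sum>s\<in>Fs. p s) = 1 \<Longrightarrow> \<exists>a\<in>Aset. (\<Sum>s\<in>Fs. p s * a s) \<le> c"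
    and c0: "0 \<le> c" and d0: "\<delta> > 0"
  shows "\<exists>K::nat>0. \<exists>as. (\<forall>k<K. as k \<in> Aset) \<and> (\<forall>s\<in>Fs. (\<Sum>k<K. as k s) / real K \<le> c + \<delta>)"
proof -
  define N where "N = card Fs"
  have N1: "real N \<ge> 1" using fin by (simp add: N_def Suc_le_eq card_gt_0_iff)
  define \<eta> where "\<eta> = min 1 (\<delta> / (2 * (c + 1)))"
  have \<eta>0: "0 < \<eta>" "\<eta> \<le> 1" using d0 c0 by (auto simp: \<eta>_def)
  have \<eta>c: "c * \<eta> \<le> \<delta> / 2"
  proof -
    have "c * \<eta> \<le> (c + 1) * \<eta>" using \<eta>0 by (simp add: mult_right_mono)
    also have "\<dots> \<le> (c + 1) * (\<delta> / (2 * (c + 1)))"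
      using c0 by (intro mult_left_mono) (auto simp: \<eta>_def)
    also have "\<dots> = \<delta> / 2" using c0 by (simp add: field_simps)
    finally show ?thesis .
  qed
  define \<beta> where "\<beta> = exp \<eta> - 1"
  have \<beta>0: "0 \<le> \<beta>" using \<eta>0 by (simp add: \<beta>_def)
  have \<beta>le: "\<beta> \<le> \<eta> + \<eta>^2" using exp_bound[of \<eta>] \<eta>0 by (simp add: \<beta>_def)
  define \<Phi> where "\<Phi> L = (\<Sum>s\<in>Fs. exp (\<eta> * L s))" for L :: "'a \<Rightarrow> real"
  have \<Phi>pos: "\<Phi> L > 0" for L unfolding \<Phi>_def using fin by (intro sum_pos) auto
  define wt where "wt L s = exp (\<eta> * L s) / \<Phi> L" for L s
  have wt_ok: "(\<forall>s\<in>Fs. 0 \<le> wt L s) \<and> (\<Sum>s\<in>Fs. wt L s) = 1" for L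
  proof
    show "\<forall>s\<in>Fs. 0 \<le> wt L s" using \<Phi>pos[of L] by (auto simp: wt_def)
    have "(\<Sum>s\<in>Fs. wt L s) = (\<Sum>s\<in>Fs. exp (\<eta> * L s)) / \<Phi> L"
      unfolding wt_def by (simp add: sum_divide_distrib)
    then show "(\<Sum>s\<in>Fs. wt L s) = 1" using \<Phi>pos[of L] by (simp add: \<Phi>_def)
  qed
  define Sel where "Sel L = (SOME a. a \<in> Aset \<and> (\<Sum>s\<in>Fs. wt L s * a s) \<le> c)" for L
  have Sel: "Sel L \<in> Aset \<and> (\<Sum>s\<in>Fs. wt L s * Sel L s) \<le> c" for L
  proof -
    have "\<exists>a. a \<in> Aset \<and> (\<Sum>s\<in>Fs. wt L s * a s) \<le> c"
      using resp[of "wt L"] wt_ok[of L] by blast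
    then show ?thesis unfolding Sel_def by (rule someI_ex)
  qed
  define Lf where "Lf = rec_nat (\<lambda>_. 0) (\<lambda>k L s. L s + Sel L s)"
  have Lf0: "Lf 0 = (\<lambda>_. 0)" by (simp add: Lf_def)
  have LfS: "Lf (Suc k) = (\<lambda>s. Lf k s + Sel (Lf k) s)" for k by (simp add: Lf_def)
  define as where "as k = Sel (Lf k)" for k
  have Lf_sum: "Lf k s = (\<Sum>j<k. as j s)" for k s
    by (induction k) (simp_all add: Lf0 LfS as_def)
  have step: "\<Phi> (Lf (Suc k)) \<le> \<Phi> (Lf k) * exp (\<beta> * c)" for k
  proof -
    define L where "L = Lf k"
    define a where "a = Sel L"
    have a01: "0 \<le> a s \<and> a s \<le> 1" for s using A01 Sel[of L] by (simp add: a_def)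
    have "\<Phi> (Lf (Suc k)) = (\<Sum>s\<in>Fs. exp (\<eta> * L s) * exp (\<eta> * a s))"
      unfolding \<Phi>_def LfS L_def a_def by (simp add: distrib_left exp_add)
    also have "\<dots> \<le> (\<Sum>s\<in>Fs. exp (\<eta> * L s) * (1 + \<beta> * a s))"
    proof (rule sum_mono)
      fix s assume "s \<in> Fs"
      have "exp (\<eta> * a s) \<le> 1 + \<beta> * a s"
        using exp_convex_bound[of "a s" \<eta>] a01[of s] by (simp add: \<beta>_def mult.commute)
      then show "exp (\<eta> * L s) * exp (\<eta> * a s) \<le> exp (\<eta> * L s) * (1 + \<beta> * a s)"
        by (rule mult_left_mono) simp
    qed
    also have "\<dots> = \<Phi> L + \<beta> * (\<Phi> L * (\<Sum>s\<in>Fs. wt L s * a s))"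
    proof -
      have "(\<Sum>s\<in>Fs. exp (\<eta> * L s) * (1 + \<beta> * a s)) = \<Phi> L + \<beta> * (\<Sum>s\<in>Fs. exp (\<eta> * L s) * a s)"
        by (simp add: \<Phi>_def distrib_left sum.distrib sum_distrib_left algebra_simps)
      moreover have "(\<Sum>s\<in>Fs. exp (\<eta> * L s) * a s) = \<Phi> L * (\<Sum>s\<in>Fs. wt L s * a s)"
        using \<Phi>pos[of L] by (simp add: wt_def sum_distrib_left)
      ultimately show ?thesis by simp
    qed
    also have "\<dots> \<le> \<Phi> L + \<beta> * (\<Phi> L * c)"
      using Sel[of L] \<Phi>pos[of L] \<beta>0 by (intro add_left_mono mult_left_mono) (auto simp: a_def)
    also have "\<dots> = \<Phi> L * (1 + \<beta> * c)" by (simp add: algebra_simps)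
    also have "\<dots> \<le> \<Phi> L * exp (\<beta> * c)"
      using \<Phi>pos[of L] exp_ge_add_one_self[of "\<beta> * c"] by (intro mult_left_mono) auto
    finally show ?thesis by (simp add: L_def)
  qed
  have bound: "\<Phi> (Lf k) \<le> N * exp (k * (\<beta> * c))" for k
  proof (induction k)
    case 0 then show ?case by (simp add: \<Phi>_def Lf0 N_def)
  next
    case (Suc k)
    have "\<Phi> (Lf (Suc k)) \<le> \<Phi> (Lf k) * exp (\<beta> * c)" by (rule step)
    also have "\<dots> \<le> N * exp (k * (\<beta> * c)) * exp (\<beta> * c)" using Suc by (intro mult_right_mono) auto
    also have "\<dots> = N * exp (Suc k * (\<beta> * c))" by (simp add: algebra_simps flip: exp_add)
    finally show ?case .
  qed
  define K :: nat where "K = nat \<lceil>2 * ln N / (\<eta> * \<delta>)\<rceil> + 1"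
  have K0: "K > 0" by (simp add: K_def)
  have lnN: "0 \<le> ln (real N)" using N1 by simp
  have Kb: "ln N / (\<eta> * K) \<le> \<delta> / 2"
  proof -
    have "2 * ln N / (\<eta> * \<delta>) \<le> K" unfolding K_def by linarith
    then have "2 * ln N \<le> K * (\<eta> * \<delta>)" using \<eta>0 d0 by (simp add: divide_le_eq)
    then show ?thesis using \<eta>0 d0 K0 by (simp add: divide_le_eq field_simps)
  qed
  have final: "Lf K s / K \<le> c + \<delta>" if sF: "s \<in> Fs" for s
  proof -
    have "exp (\<eta> * Lf K s) \<le> \<Phi> (Lf K)"
      unfolding \<Phi>_def by (rule member_le_sum) (use fin sF in auto)
    also have "\<dots> \<le> N * exp (K * (\<beta> * c))" by (rule bound)
    finally have "ln (exp (\<eta> * Lf K s)) \<le> ln (N * exp (K * (\<beta> * c)))"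
      using N1 by (subst ln_le_cancel_iff) auto
    then have 1: "\<eta> * Lf K s \<le> ln N + K * (\<beta> * c)" using N1 by (simp add: ln_mult)
    have "Lf K s / K = (\<eta> * Lf K s) / (\<eta> * K)" using \<eta>0 by simp
    also have "\<dots> \<le> (ln N + K * (\<beta> * c)) / (\<eta> * K)"
      using 1 \<eta>0 K0 by (intro divide_right_mono) auto
    also have "\<dots> = ln N / (\<eta> * K) + c * (\<beta> / \<eta>)" using \<eta>0 K0 by (simp add: field_simps)
    also have "c * (\<beta> / \<eta>) \<le> c * (1 + \<eta>)"
    proof -
      have "\<beta> / \<eta> \<le> 1 + \<eta>" using \<beta>le \<eta>0 by (simp add: divide_le_eq power2_eq_square algebra_simps)
      then show ?thesis using c0 by (rule mult_left_mono)
    qed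
    finally show ?thesis using Kb \<eta>c by (simp add: algebra_simps)
  qed
  have h1: "\<forall>k<K. as k \<in> Aset" using Sel by (simp add: as_def)
  have h2: "\<forall>s\<in>Fs. (\<Sum>k<K. as k s) / K \<le> c + \<delta>" using final by (simp add: Lf_sum)
  show ?thesis
    apply (rule exI[of _ K])
    apply (rule conjI[OF K0])
    apply (rule exI[of _ as])
    apply (rule conjI[OF h1 h2])
    done
qed

lemma expect_le_const:
  fixes f :: "'a \<Rightarrow> real"
  assumes "integrable (measure_pmf p) f" "\<And>s. s \<in> set_pmf p \<Longrightarrow> f s \<le> c"
  shows "measure_pmf.expectation p f \<le> c"
proof -
  have "measure_pmf.expectation p f \<le> measure_pmf.expectation p (\<lambda>_. c)"
    by (rule integral_mono_AE[OF assms(1)]) (auto intro!: AE_pmfI assms(2))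
  then show ?thesis by simp
qed

lemma val_mix:
  assumes "K > 0"
  shows "val \<pi> (bind_pmf (pmf_of_set {..<K}) qk) s = (\<Sum>k<K. val \<pi> (qk k) s) / real K"
proof -
  have ne: "{..<K} \<noteq> {}" using assms by auto
  have "emeasure (measure_pmf (bind_pmf (pmf_of_set {..<K}) qk)) {t. \<pi> s t}
      = (\<Sum>k<K. emeasure (measure_pmf (qk k)) {t. \<pi> s t}) / of_nat K"
    using nn_integral_pmf_of_set[OF ne] by simp
  also have "\<dots> = (\<Sum>k<K. ennreal (val \<pi> (qk k) s)) / ennreal (real K)"
    by (simp add: val_def measure_pmf.emeasure_eq_measure ennreal_of_nat_eq_real_of_nat)
  also have "\<dots> = ennreal (\<Sum>k<K. val \<pi> (qk k) s) / ennreal (real K)"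
    by (subst sum_ennreal) (auto simp: val_nonneg)
  also have "\<dots> = ennreal ((\<Sum>k<K. val \<pi> (qk k) s) / real K)"
    using assms by (intro divide_ennreal) (auto intro: sum_nonneg val_nonneg)
  finally have "ennreal (val \<pi> (bind_pmf (pmf_of_set {..<K}) qk) s) = ennreal ((\<Sum>k<K. val \<pi> (qk k) s) / real K)"
    by (simp add: val_def measure_pmf.emeasure_eq_measure)
  then show ?thesis
    by (subst (asm) ennreal_inj) (auto simp: val_nonneg intro!: divide_nonneg_nonneg sum_nonneg)
qed

lemma weights_pmf:
  fixes Fs :: "'a set" and w :: "'a \<Rightarrow> real"
  assumes fin: "finite Fs" and w0: "\<forall>s\<in>Fs. 0 \<le> w s" and w1: "(\<Sum>s\<in>Fs. w s) = 1"
  shows "\<exists>P. set_pmf P \<subseteq> Fs \<and> (\<forall>s\<in>Fs. pmf P s = w s)"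
proof -
  define f where "f s = (if s \<in> Fs then w s else 0)" for s
  have f0: "0 \<le> f s" for s using w0 by (auto simp: f_def)
  have "(\<integral>\<^sup>+s. ennreal (f s) \<partial>count_space UNIV) = (\<integral>\<^sup>+s. ennreal (f s) \<partial>count_space Fs)"
    by (rule nn_integral_count_space_eq) (auto simp: f_def)
  also have "\<dots> = (\<Sum>s\<in>Fs. ennreal (f s))" using fin by (rule nn_integral_count_space_finite)
  also have "\<dots> = ennreal (\<Sum>s\<in>Fs. f s)" by (rule sum_ennreal) (use f0 in auto)
  also have "(\<Sum>s\<in>Fs. f s) = 1" using w1 by (simp add: f_def)
  finally have fi: "(\<integral>\<^sup>+s. ennreal (f s) \<partial>count_space UNIV) = 1" by simp
  have pe: "pmf (embed_pmf f) s = f s" for s by (rule pmf_embed_pmf[OF f0 fi])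
  show ?thesis
  proof (intro exI[of _ "embed_pmf f"] conjI ballI)
    show "set_pmf (embed_pmf f) \<subseteq> Fs"
      by (auto simp: set_pmf_iff pe f_def split: if_splits)
    fix s assume "s \<in> Fs" then show "pmf (embed_pmf f) s = w s" by (simp add: pe f_def)
  qed
qed

lemma expect_eventual:
  fixes f :: "'a \<Rightarrow> real" and g :: "nat \<Rightarrow> 'a \<Rightarrow> real"
  assumes f01: "\<And>s. 0 \<le> f s \<and> f s \<le> 1" and g01: "\<And>n s. 0 \<le> g n s \<and> g n s \<le> 1"
    and ev: "\<And>s \<epsilon>. s \<in> set_pmf p \<Longrightarrow> \<epsilon> > 0 \<Longrightarrow> eventually (\<lambda>n. f s \<le> g n s + \<epsilon>) sequentially"
    and e0: "\<epsilon> > 0"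
  shows "eventually (\<lambda>n. measure_pmf.expectation p f \<le> measure_pmf.expectation p (g n) + 2 * \<epsilon>) sequentially"
proof -
  have intf: "integrable (measure_pmf p) f"
    by (rule measure_pmf.integrable_const_bound[where B=1]) (use f01 in auto)
  have intg: "integrable (measure_pmf p) (g n)" for n
    by (rule measure_pmf.integrable_const_bound[where B=1]) (use g01 in auto)
  obtain x :: "nat \<Rightarrow> 'a" where x: "set_pmf p = range x"
    using countable_set_pmf set_pmf_not_empty by (metis uncountable_def)
  define A where "A N = x ` {..<N}" for N
  have inc: "incseq A" unfolding A_def incseq_def by auto
  have UA: "(\<Union>N. A N) = set_pmf p" unfolding A_def x by auto
  have "(\<lambda>N. measure_pmf.prob p (A N)) \<longlonglongrightarrow> measure_pmf.prob p (\<Union>N. A N)"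
    by (rule measure_pmf.finite_Lim_measure_incseq[OF _ inc]) auto
  then have "(\<lambda>N. measure_pmf.prob p (A N)) \<longlonglongrightarrow> 1" using UA measure_Int_set_pmf[of p UNIV] by simp
  then have "eventually (\<lambda>N. 1 - \<epsilon> < measure_pmf.prob p (A N)) sequentially"
    using e0 by (intro order_tendstoD(1)) auto
  then obtain N where N: "1 - \<epsilon> < measure_pmf.prob p (A N)" using ev_ex by blast
  define Fin where "Fin = A N"
  have finF: "finite Fin" by (simp add: Fin_def A_def)
  have FinS: "Fin \<subseteq> set_pmf p" using UA by (auto simp: Fin_def)
  have compl: "measure_pmf.prob p (UNIV - Fin) < \<epsilon>"
    using measure_pmf.prob_compl[of Fin p] N by (simp add: Fin_def)
  have "eventually (\<lambda>n. \<forall>s\<in>Fin. f s \<le> g n s + \<epsilon>) sequentially"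
    by (rule eventually_ball_finite[OF finF]) (use ev FinS e0 in blast)
  then show ?thesis
  proof (rule eventually_mono)
    fix n assume H: "\<forall>s\<in>Fin. f s \<le> g n s + \<epsilon>"
    have pt: "f s \<le> g n s + (\<epsilon> + indicator (UNIV - Fin) s)" for s
    proof (cases "s \<in> Fin")
      case True then show ?thesis using H e0 by auto
    next
      case False then show ?thesis using f01[of s] g01[of n s] e0 by auto
    qed
    have intI: "integrable (measure_pmf p) (\<lambda>s. \<epsilon> + indicator (UNIV - Fin) s :: real)"
      by (rule measure_pmf.integrable_const_bound[where B="\<epsilon> + 1"]) (use e0 in \<open>auto simp: indicator_def\<close>)
    have "measure_pmf.expectation p f \<le> measure_pmf.expectation p (\<lambda>s. g n s + (\<epsilon> + indicator (UNIV - Fin) s))"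
      by (rule integral_mono[OF intf]) (use intg intI pt in auto)
    also have "\<dots> = measure_pmf.expectation p (g n) + (\<epsilon> + measure_pmf.prob p (UNIV - Fin))"
    proof -
      have iI: "integrable (measure_pmf p) (indicator (UNIV - Fin) :: 'a \<Rightarrow> real)"
        by (rule measure_pmf.integrable_const_bound[where B=1]) (auto simp: indicator_def)
      have "measure_pmf.expectation p (\<lambda>s. \<epsilon> + indicator (UNIV - Fin) s) =
            measure_pmf.expectation p (\<lambda>_. \<epsilon>) + measure_pmf.expectation p (indicator (UNIV - Fin))"
        by (rule Bochner_Integration.integral_add) (use iI in auto)
      also have "\<dots> = \<epsilon> + measure_pmf.prob p (UNIV - Fin)"
        by (simp add: measure_pmf.emeasure_eq_measure)
      finally have "measure_pmf.expectation p (\<lambda>s. \<epsilon> + indicator (UNIV - Fin) s) = \<epsilon> + measure_pmf.prob p (UNIV - Fin)" .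
      then show ?thesis using intg intI by (simp add: Bochner_Integration.integral_add)
    qed
    also have "\<dots> \<le> measure_pmf.expectation p (g n) + 2 * \<epsilon>" using compl by simp
    finally show "measure_pmf.expectation p f \<le> measure_pmf.expectation p (g n) + 2 * \<epsilon>" .
  qed
qed

theorem theorem2p11:
  fixes S :: "'a set" and T :: "'b set" and \<pi> :: "'a \<Rightarrow> 'b \<Rightarrow> bool"
  assumes "countable S" "infinite S" "countable T" "infinite T"
    and "ascending_union_closed (B2_down S T \<pi>)"
  shows "(\<forall>p\<in>Delta S. \<exists>q0\<in>Delta T.
            pi_mix S T \<pi> p q0 = (INF q\<in>Delta T. pi_mix S T \<pi> p q))
       \<and> (\<exists>q0\<in>Delta T. (SUP p\<in>Delta S. pi_mix S T \<pi> p q0)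
            = (INF q\<in>Delta T. SUP p\<in>Delta S. pi_mix S T \<pi> p q))
       \<and> (SUP p\<in>Delta S. INF q\<in>Delta T. pi_mix S T \<pi> p q)
            = (INF q\<in>Delta T. SUP p\<in>Delta S. pi_mix S T \<pi> p q)"
proof -
  define V where "V = pi_mix S T \<pi>"
  have bij: "bij_betw (from_nat_into S) UNIV S" by (rule bij_betw_from_nat_into[OF assms(1,2)])
  define e where "e = from_nat_into S"
  have einj: "inj e" using bij by (simp add: e_def bij_betw_def)
  have erng: "range e = S" using bij by (simp add: e_def bij_betw_def)
  have TNE: "T \<noteq> {}" using assms(4) by auto
  have SNE: "S \<noteq> {}" using assms(2) by auto
  define tt where "tt = from_nat_into T"
  have trng: "range tt = T" unfolding tt_def by (rule range_from_nat_into[OF TNE assms(3)])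
  note key = key_lemma[OF assms(5) einj erng trng]
  obtain s0 where s0: "s0 \<in> S" using SNE by blast
  obtain t0 where t0: "t0 \<in> T" using TNE by blast
  have DSne: "Delta S \<noteq> {}" using s0 by (auto simp: Delta_def intro!: exI[of _ "return_pmf s0"])
  have DTne: "Delta T \<noteq> {}" using t0 by (auto simp: Delta_def intro!: exI[of _ "return_pmf t0"])
  have VE: "V p q = measure_pmf.expectation p (val \<pi> q)" if "p \<in> Delta S" "q \<in> Delta T" for p q
    unfolding V_def by (rule pi_mix_eq[OF that])
  have Vb: "0 \<le> V p q \<and> V p q \<le> 1" if "p \<in> Delta S" "q \<in> Delta T" for p q
  proof
    show "0 \<le> V p q" unfolding VE[OF that] by (rule Bochner_Integration.integral_nonneg) (simp add: val_nonneg)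
    show "V p q \<le> 1" unfolding VE[OF that] by (rule expect_le_const[OF integrable_val]) (simp add: val_le1)
  qed
  have qsT: "set_pmf q \<subseteq> T" if "q \<in> Delta T" for q using that by (simp add: Delta_def)
  have psS: "set_pmf p \<subseteq> S" if "p \<in> Delta S" for p using that by (simp add: Delta_def)
  have bddb: "bdd_below ((\<lambda>q. V p q) ` Delta T)" if "p \<in> Delta S" for p
    using Vb[OF that] by (intro bdd_belowI[of _ 0]) auto
  have bdda: "bdd_above ((\<lambda>p. V p q) ` Delta S)" if "q \<in> Delta T" for q
    using Vb[OF _ that] by (intro bdd_aboveI[of _ 1]) auto
  have small: "\<exists>N::nat. 1 / (real N + 1) < \<epsilon>" if "\<epsilon> > 0" for \<epsilon> :: real
    using reals_Archimedean[OF that] by (metis inverse_eq_divide of_nat_Suc add.commute)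
  have small_mono: "1 / (real (r n) + 1) \<le> 1 / (real N + 1)" if "strict_mono r" "N \<le> n" for r :: "nat \<Rightarrow> nat" and n N
  proof -
    have "N \<le> r n" using seq_suble[OF that(1), of n] that(2) by simp
    then show ?thesis by (intro divide_left_mono) auto
  qed

  have part1: "\<exists>q0\<in>Delta T. V p q0 = (INF q\<in>Delta T. V p q)" if pS: "p \<in> Delta S" for p
  proof -
    define m where "m = (INF q\<in>Delta T. V p q)"
    have "\<exists>q\<in>Delta T. V p q < m + 1 / (real n + 1)" for n
    proof -
      have "m < m + 1 / (real n + 1)" by simp
      then show ?thesis unfolding m_def by (subst (asm) cINF_less_iff[OF DTne bddb[OF pS]])
    qed
    then obtain qs where qs: "\<forall>n. qs n \<in> Delta T \<and> V p (qs n) < m + 1 / (real n + 1)"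
      using choice[of "\<lambda>n q. q \<in> Delta T \<and> V p q < m + 1 / (real n + 1)"] by blast
    obtain q0 r where q0: "q0 \<in> Delta T" and r: "strict_mono r"
      and H: "\<forall>s\<in>S. \<forall>\<epsilon>>0. eventually (\<lambda>n. val \<pi> q0 s \<le> val \<pi> (qs (r n)) s + \<epsilon>) sequentially"
      using key[of qs] qs qsT by blast
    have "V p q0 \<le> m"
    proof (rule field_le_epsilon)
      fix \<epsilon> :: real assume e0: "\<epsilon> > 0"
      have ev1: "eventually (\<lambda>n. measure_pmf.expectation p (val \<pi> q0) \<le>
                   measure_pmf.expectation p (val \<pi> (qs (r n))) + 2 * (\<epsilon>/3)) sequentially"
        by (rule expect_eventual) (use val_nonneg val_le1 H psS[OF pS] e0 in auto)
      obtain N :: nat where N: "1 / (real N + 1) < \<epsilon>/3" using small[of "\<epsilon>/3"] e0 by auto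
      have "eventually (\<lambda>n. n \<ge> N) sequentially" by (rule eventually_ge_at_top)
      with ev1 obtain n where n: "measure_pmf.expectation p (val \<pi> q0) \<le>
                   measure_pmf.expectation p (val \<pi> (qs (r n))) + 2 * (\<epsilon>/3)" "n \<ge> N"
        using ev_ex[OF eventually_conj[OF ev1]] by blast
      have "V p q0 \<le> V p (qs (r n)) + 2 * (\<epsilon>/3)" using n(1) VE pS q0 qs by simp
      also have "\<dots> < m + 1 / (real (r n) + 1) + 2 * (\<epsilon>/3)" using qs by simp
      also have "1 / (real (r n) + 1) \<le> 1 / (real N + 1)" by (rule small_mono[OF r n(2)])
      finally show "V p q0 \<le> m + \<epsilon>" using N by simp
    qed
    moreover have "m \<le> V p q0" unfolding m_def by (rule cINF_lower[OF bddb[OF pS] q0])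
    ultimately show ?thesis using q0 unfolding m_def by (intro bexI[of _ q0]) auto
  qed

  define W where "W = (SUP p\<in>Delta S. INF q\<in>Delta T. V p q)"
  define Vs where "Vs q = (SUP p\<in>Delta S. V p q)" for q
  have INF_le: "(INF q'\<in>Delta T. V p q') \<le> V p q" if "p \<in> Delta S" "q \<in> Delta T" for p q
    by (rule cINF_lower[OF bddb[OF that(1)] that(2)])
  have INF0: "0 \<le> (INF q'\<in>Delta T. V p q')" if "p \<in> Delta S" for p
    by (rule cINF_greatest[OF DTne]) (use Vb that in auto)
  have bddW: "bdd_above ((\<lambda>p. INF q\<in>Delta T. V p q) ` Delta S)"
  proof (rule bdd_aboveI[of _ 1])
    fix x assume "x \<in> (\<lambda>p. INF q\<in>Delta T. V p q) ` Delta S"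
    then obtain p where p: "p \<in> Delta S" "x = (INF q\<in>Delta T. V p q)" by blast
    obtain q where q: "q \<in> Delta T" using DTne by blast
    show "x \<le> 1" using INF_le[OF p(1) q] Vb[OF p(1) q] p(2) by simp
  qed
  have W_ge: "(INF q\<in>Delta T. V p q) \<le> W" if "p \<in> Delta S" for p
    unfolding W_def by (rule cSUP_upper[OF that bddW])
  have W0: "0 \<le> W"
  proof -
    obtain p where "p \<in> Delta S" using DSne by blast
    then show ?thesis using INF0 W_ge by (meson order.trans)
  qed
  have Wle: "W \<le> Vs q" if q: "q \<in> Delta T" for q
    unfolding W_def Vs_def
  proof (rule cSUP_least[OF DSne])
    fix p assume p: "p \<in> Delta S"
    have "(INF q'\<in>Delta T. V p q') \<le> V p q" by (rule INF_le[OF p q])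
    also have "\<dots> \<le> (SUP p\<in>Delta S. V p q)" by (rule cSUP_upper[OF p bdda[OF q]])
    finally show "(INF q'\<in>Delta T. V p q') \<le> (SUP p\<in>Delta S. V p q)" .
  qed
  have Qex: "\<exists>Q\<in>Delta T. \<forall>s\<in>e ` {..n}. val \<pi> Q s \<le> W + 1 / (real n + 1)" for n
  proof -
    define Fs where "Fs = e ` {..n}"
    define \<delta> :: real where "\<delta> = 1 / (2 * (real n + 1))"
    have d0: "\<delta> > 0" by (simp add: \<delta>_def)
    have FsS: "Fs \<subseteq> S" using erng by (auto simp: Fs_def)
    have "\<exists>K::nat>0. \<exists>as. (\<forall>k<K. as k \<in> val \<pi> ` Delta T) \<and>
            (\<forall>s\<in>Fs. (\<Sum>k<K. as k s) / real K \<le> (W + \<delta>) + \<delta>)"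
    proof (rule mwu)
      show "finite Fs" "Fs \<noteq> {}" by (auto simp: Fs_def)
      show "\<And>a s. a \<in> val \<pi> ` Delta T \<Longrightarrow> 0 \<le> a s \<and> a s \<le> 1" by (auto simp: val_nonneg val_le1)
      show "0 \<le> W + \<delta>" using W0 d0 by simp
      show "\<delta> > 0" by (rule d0)
    next
      fix pw :: "'a \<Rightarrow> real" assume pw0: "\<forall>s\<in>Fs. 0 \<le> pw s" and pw1: "(\<Sum>s\<in>Fs. pw s) = 1"
      obtain P where P: "set_pmf P \<subseteq> Fs" "\<forall>s\<in>Fs. pmf P s = pw s"
        using weights_pmf[of Fs pw] pw0 pw1 by (auto simp: Fs_def)
      have PS: "P \<in> Delta S" using P FsS by (auto simp: Delta_def)
      have "(INF q\<in>Delta T. V P q) < W + \<delta>" using W_ge[OF PS] d0 by simp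
      then obtain q where q: "q \<in> Delta T" "V P q < W + \<delta>"
        by (subst (asm) cINF_less_iff[OF DTne bddb[OF PS]]) blast
      have "V P q = (\<Sum>s\<in>Fs. val \<pi> q s * pmf P s)"
        unfolding VE[OF PS q(1)] by (rule integral_measure_pmf_real) (use P Fs_def in auto)
      also have "\<dots> = (\<Sum>s\<in>Fs. pw s * val \<pi> q s)" using P by (simp add: mult.commute)
      finally show "\<exists>a\<in>val \<pi> ` Delta T. (\<Sum>s\<in>Fs. pw s * a s) \<le> W + \<delta>"
        using q by (intro bexI[of _ "val \<pi> q"]) auto
    qed
    then obtain K :: nat and as where K: "K > 0" and as: "\<forall>k<K. as k \<in> val \<pi> ` Delta T"
      and asb: "\<forall>s\<in>Fs. (\<Sum>k<K. as k s) / real K \<le> (W + \<delta>) + \<delta>" by blast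
    define qk where "qk k = (SOME q. q \<in> Delta T \<and> as k = val \<pi> q)" for k
    have qk: "qk k \<in> Delta T \<and> as k = val \<pi> (qk k)" if "k < K" for k
    proof -
      have "\<exists>q. q \<in> Delta T \<and> as k = val \<pi> q" using as that by blast
      then show ?thesis unfolding qk_def by (rule someI_ex)
    qed
    define Q where "Q = bind_pmf (pmf_of_set {..<K}) qk"
    have QT: "Q \<in> Delta T"
    proof -
      have "set_pmf (pmf_of_set {..<K}) = {..<K}" using K by (intro set_pmf_of_set) auto
      then show ?thesis using qk by (auto simp: Q_def Delta_def set_bind_pmf)
    qed
    have "val \<pi> Q s \<le> W + 1 / (real n + 1)" if "s \<in> Fs" for s
    proof -
      have "val \<pi> Q s = (\<Sum>k<K. val \<pi> (qk k) s) / real K" unfolding Q_def by (rule val_mix[OF K])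
      also have "(\<Sum>k<K. val \<pi> (qk k) s) = (\<Sum>k<K. as k s)" using qk by (intro sum.cong) auto
      also have "(\<Sum>k<K. as k s) / real K \<le> W + \<delta> + \<delta>" using asb that by blast
      also have "W + \<delta> + \<delta> = W + 1 / (real n + 1)" by (simp add: \<delta>_def field_simps)
      finally show ?thesis .
    qed
    then show ?thesis using QT unfolding Fs_def by blast
  qed
  then obtain Qs where Qs: "\<forall>n. Qs n \<in> Delta T \<and> (\<forall>s\<in>e ` {..n}. val \<pi> (Qs n) s \<le> W + 1 / (real n + 1))"
    using choice[of "\<lambda>n Q. Q \<in> Delta T \<and> (\<forall>s\<in>e ` {..n}. val \<pi> Q s \<le> W + 1 / (real n + 1))"] by blast
  obtain q0 r where q0: "q0 \<in> Delta T" and r: "strict_mono r"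
    and H: "\<forall>s\<in>S. \<forall>\<epsilon>>0. eventually (\<lambda>n. val \<pi> q0 s \<le> val \<pi> (Qs (r n)) s + \<epsilon>) sequentially"
    using key[of Qs] Qs qsT by blast
  have vq0: "val \<pi> q0 s \<le> W" if sS: "s \<in> S" for s
  proof (rule field_le_epsilon)
    fix \<epsilon> :: real assume e0: "\<epsilon> > 0"
    obtain j where j: "s = e j" using sS erng by blast
    obtain N :: nat where N: "1 / (real N + 1) < \<epsilon>/2" using small[of "\<epsilon>/2"] e0 by auto
    have ev1: "eventually (\<lambda>n. val \<pi> q0 s \<le> val \<pi> (Qs (r n)) s + \<epsilon>/2) sequentially"
      using H sS e0 by simp
    have "eventually (\<lambda>n. n \<ge> max N j) sequentially" by (rule eventually_ge_at_top)
    with ev1 obtain n where n: "val \<pi> q0 s \<le> val \<pi> (Qs (r n)) s + \<epsilon>/2" "n \<ge> max N j"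
      using ev_ex[OF eventually_conj[OF ev1]] by blast
    have "j \<le> r n" using seq_suble[OF r, of n] n(2) by simp
    then have "s \<in> e ` {..r n}" using j by auto
    then have "val \<pi> (Qs (r n)) s \<le> W + 1 / (real (r n) + 1)" using Qs by blast
    also have "1 / (real (r n) + 1) \<le> 1 / (real N + 1)" by (rule small_mono[OF r]) (use n(2) in simp)
    finally show "val \<pi> q0 s \<le> W + \<epsilon>" using n(1) N by simp
  qed
  have Vsq0: "Vs q0 \<le> W"
    unfolding Vs_def
  proof (rule cSUP_least[OF DSne])
    fix p assume p: "p \<in> Delta S"
    show "V p q0 \<le> W" unfolding VE[OF p q0]
      by (rule expect_le_const[OF integrable_val]) (use vq0 psS[OF p] in blast)
  qed
  have bddVs: "bdd_below (Vs ` Delta T)" using Wle W0 by (intro bdd_belowI[of _ 0]) (auto intro: order.trans)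
  have I1: "(INF q\<in>Delta T. Vs q) \<le> Vs q0" by (rule cINF_lower[OF bddVs q0])
  have I2: "W \<le> (INF q\<in>Delta T. Vs q)" by (rule cINF_greatest[OF DTne Wle])
  have eqs: "Vs q0 = (INF q\<in>Delta T. Vs q)" "W = (INF q\<in>Delta T. Vs q)"
    using I1 I2 Vsq0 by linarith+
  show ?thesis
    using part1 eqs q0 unfolding V_def W_def Vs_def by blast
qed

end
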